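(* Let $X$ be an undirected graph and $f:Y\to X$ an object of $C_X$ such that $Y$ has no loops. Then for every $p>1$ and every $p$-cycle $h:c^p_U\to Y$ without backtracking, there exist an element $U\to X$ of $R^p_X$ (with distinguished cycle subgraph $c^p_U\subseteq U$) and a morphism $g:U\to Y$ of $C_X$ whose restriction to $c^p_U$ equals $h$.
   Context: An undirected graph has nodes $X(0)$, half-arcs $X(1)$, $s,t:X(1)\to X(0)$, and an involution $\iota$ with $s\circ\iota=t$; morphisms commute with $s,t,\iota$. An arc is a pair $\{u,\iota(u)\}$; a loop is an arc whose source and target coincide (including half-arcs fixed by $\iota$). For a node $x$, $X(x,* )$ is the set of arcs having $x$ as source or target. A morphism $f$ is a covering if for every node $x$ the induced map on arcs $X(x,* )\to Y(f_0(x),* )$ is bijective. $C_X$: objects are coverings $Y\to X$, morphisms are coverings $h:Y\to Z$ commuting with the maps to $X$. For $p\ge1$, $c^p_U$ has nodes $\mathbb{Z}/p\mathbb{Z}$ and half-arcs $[n]^\pm$ with $s([n]^+)=[n]$, $t([n]^+)=[n+1]$, $s([n]^-)=[n+1]$, $t([n]^-)=[n]$, $\iota([n]^+)=[n]^-$; a $p$-cycle of $Y$ is a morphism $h:c^p_U\to Y$, which has backtracking if $h_1([n+1]^+)=h_1([n]^-)$ for some $n$. $R^p_X$ is the set of objects $U\to X$ of $C_X$ such that $U$ is obtained by attaching a forest to a $p$-cycle: $U$ contains a subgraph isomorphic to $c^p_U$ and removing the arcs of this subgraph leaves a forest each of whose trees contains exactly one node of the cycle. *)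

theory Defs
  imports Main
begin

record ('v, 'a) ugraph =
  gnodes :: "'v set"
  harcs  :: "'a set"
  gsrc   :: "'a \<Rightarrow> 'v"
  gtgt   :: "'a \<Rightarrow> 'v"
  ginv   :: "'a \<Rightarrow> 'a"

definition wf_graph :: "('v, 'a) ugraph \<Rightarrow> bool" where
  "wf_graph G \<longleftrightarrow>
     (\<forall>u\<in>harcs G. gsrc G u \<in> gnodes G \<and> gtgt G u \<in> gnodes G \<and> ginv G u \<in> harcs G
        \<and> ginv G (ginv G u) = u \<and> gsrc G (ginv G u) = gtgt G u)"

definition is_morphism :: "('v, 'a) ugraph \<Rightarrow> ('w, 'b) ugraph \<Rightarrow> ('v \<Rightarrow> 'w) \<Rightarrow> ('a \<Rightarrow> 'b) \<Rightarrow> bool" where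
  "is_morphism G H f0 f1 \<longleftrightarrow>
     (\<forall>x\<in>gnodes G. f0 x \<in> gnodes H) \<and>
     (\<forall>u\<in>harcs G. f1 u \<in> harcs H \<and> gsrc H (f1 u) = f0 (gsrc G u)
        \<and> gtgt H (f1 u) = f0 (gtgt G u) \<and> ginv H (f1 u) = f1 (ginv G u))"

definition arc_of :: "('v, 'a) ugraph \<Rightarrow> 'a \<Rightarrow> 'a set" where
  "arc_of G u = {u, ginv G u}"

definition arcs_at :: "('v, 'a) ugraph \<Rightarrow> 'v \<Rightarrow> 'a set set" where
  "arcs_at G x = {arc_of G u | u. u \<in> harcs G \<and> (gsrc G u = x \<or> gtgt G u = x)}"

definition is_covering :: "('v, 'a) ugraph \<Rightarrow> ('w, 'b) ugraph \<Rightarrow> ('v \<Rightarrow> 'w) \<Rightarrow> ('a \<Rightarrow> 'b) \<Rightarrow> bool" where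
  "is_covering G H f0 f1 \<longleftrightarrow> is_morphism G H f0 f1 \<and>
     (\<forall>x\<in>gnodes G. bij_betw (\<lambda>e. f1 ` e) (arcs_at G x) (arcs_at H (f0 x)))"

text \<open>A loop: an arc whose source and target coincide (includes iota-fixed half-arcs).\<close>
definition has_loop :: "('v, 'a) ugraph \<Rightarrow> bool" where
  "has_loop G \<longleftrightarrow> (\<exists>u\<in>harcs G. gsrc G u = gtgt G u)"

text \<open>The cycle graph c^p_U: nodes Z/pZ represented by {0..<p}; the half-arc [n]^+ is (n, True),
  [n]^- is (n, False).\<close>
definition cyc :: "nat \<Rightarrow> (nat, nat \<times> bool) ugraph" where
  "cyc p = \<lparr> gnodes = {..<p}, harcs = {..<p} \<times> UNIV,
            gsrc = (\<lambda>(n, b). if b then n else Suc n mod p),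
            gtgt = (\<lambda>(n, b). if b then Suc n mod p else n),
            ginv = (\<lambda>(n, b). (n, \<not> b)) \<rparr>"

definition is_pcycle :: "('v, 'a) ugraph \<Rightarrow> nat \<Rightarrow> (nat \<Rightarrow> 'v) \<Rightarrow> (nat \<times> bool \<Rightarrow> 'a) \<Rightarrow> bool" where
  "is_pcycle G p h0 h1 \<longleftrightarrow> is_morphism (cyc p) G h0 h1"

definition has_backtracking :: "nat \<Rightarrow> (nat \<times> bool \<Rightarrow> 'a) \<Rightarrow> bool" where
  "has_backtracking p h1 \<longleftrightarrow> (\<exists>n<p. h1 (Suc n mod p, True) = h1 (n, False))"

definition is_forest :: "('v, 'a) ugraph \<Rightarrow> bool" where
  "is_forest G \<longleftrightarrow> \<not> has_loop G \<and>
     (\<forall>q\<ge>1. \<forall>h0 h1. is_pcycle G q h0 h1 \<longrightarrow> has_backtracking q h1)"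

definition del_arcs :: "('v, 'a) ugraph \<Rightarrow> 'a set \<Rightarrow> ('v, 'a) ugraph" where
  "del_arcs G K = G\<lparr> harcs := harcs G - K \<rparr>"

definition connected_in :: "('v, 'a) ugraph \<Rightarrow> 'v \<Rightarrow> 'v \<Rightarrow> bool" where
  "connected_in G = (\<lambda>x y. \<exists>u\<in>harcs G. gsrc G u = x \<and> gtgt G u = y)\<^sup>*\<^sup>*"

definition obj_C :: "('v, 'a) ugraph \<Rightarrow> ('w, 'b) ugraph \<Rightarrow> ('w \<Rightarrow> 'v) \<Rightarrow> ('b \<Rightarrow> 'a) \<Rightarrow> bool" where
  "obj_C X Y f0 f1 \<longleftrightarrow> wf_graph X \<and> wf_graph Y \<and> is_covering Y X f0 f1"

definition mor_C :: "('w, 'b) ugraph \<Rightarrow> ('w \<Rightarrow> 'v) \<Rightarrow> ('b \<Rightarrow> 'a) \<Rightarrow>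
                     ('u, 'c) ugraph \<Rightarrow> ('u \<Rightarrow> 'v) \<Rightarrow> ('c \<Rightarrow> 'a) \<Rightarrow>
                     ('u \<Rightarrow> 'w) \<Rightarrow> ('c \<Rightarrow> 'b) \<Rightarrow> bool" where
  "mor_C Y f0 f1 U \<phi>0 \<phi>1 g0 g1 \<longleftrightarrow> is_covering U Y g0 g1 \<and>
     (\<forall>x\<in>gnodes U. f0 (g0 x) = \<phi>0 x) \<and> (\<forall>u\<in>harcs U. f1 (g1 u) = \<phi>1 u)"

text \<open>Membership of (U, phi) in R^p_X, with distinguished cycle subgraph given by the
  injective morphism (k0, k1) : c^p_U -> U.\<close>
definition in_R :: "('v, 'a) ugraph \<Rightarrow> nat \<Rightarrow> ('u, 'c) ugraph \<Rightarrow> ('u \<Rightarrow> 'v) \<Rightarrow> ('c \<Rightarrow> 'a) \<Rightarrow>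
                    (nat \<Rightarrow> 'u) \<Rightarrow> (nat \<times> bool \<Rightarrow> 'c) \<Rightarrow> bool" where
  "in_R X p U \<phi>0 \<phi>1 k0 k1 \<longleftrightarrow> obj_C X U \<phi>0 \<phi>1 \<and>
     is_morphism (cyc p) U k0 k1 \<and> inj_on k0 (gnodes (cyc p)) \<and> inj_on k1 (harcs (cyc p)) \<and>
     (let F = del_arcs U (k1 ` harcs (cyc p)) in
        is_forest F \<and>
        (\<forall>x\<in>gnodes U. \<exists>!c. c \<in> k0 ` gnodes (cyc p) \<and> connected_in F x c))"

end

theory Submission
  imports Defs
begin


definition outs :: "('v, 'a) ugraph \<Rightarrow> 'v \<Rightarrow> 'a set" where
  "outs G x = {u \<in> harcs G. gsrc G u = x}"

lemma arcs_at_eq: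
  assumes "wf_graph G" shows "arcs_at G x = arc_of G ` outs G x"
proof
  show "arc_of G ` outs G x \<subseteq> arcs_at G x"
    unfolding arcs_at_def outs_def by auto
  show "arcs_at G x \<subseteq> arc_of G ` outs G x"
  proof
    fix e assume "e \<in> arcs_at G x"
    then obtain u where u: "e = arc_of G u" "u \<in> harcs G" "gsrc G u = x \<or> gtgt G u = x"
      unfolding arcs_at_def by auto
    show "e \<in> arc_of G ` outs G x"
    proof (cases "gsrc G u = x")
      case True thus ?thesis using u unfolding outs_def by auto
    next
      case False
      hence t: "gtgt G u = x" using u by auto
      have "ginv G u \<in> harcs G" "gsrc G (ginv G u) = x" "ginv G (ginv G u) = u"
        using assms u t unfolding wf_graph_def by auto
      hence "ginv G u \<in> outs G x" "arc_of G (ginv G u) = e"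
        using u unfolding outs_def arc_of_def by auto
      thus ?thesis by (metis image_eqI)
    qed
  qed
qed

lemma inj_arc:
  assumes "wf_graph G" "\<not> has_loop G" shows "inj_on (arc_of G) (outs G x)"
proof (rule inj_onI)
  fix u v assume u: "u \<in> outs G x" and v: "v \<in> outs G x" and e: "arc_of G u = arc_of G v"
  show "u = v"
  proof (rule ccontr)
    assume "u \<noteq> v"
    with e have "u = ginv G v" unfolding arc_of_def by (auto simp: doubleton_eq_iff)
    hence "gsrc G u = gtgt G v" using assms v unfolding wf_graph_def outs_def by auto
    thus False using u v assms(2) unfolding outs_def has_loop_def by auto
  qed
qed

lemma mor_arc:
  assumes "is_morphism G H f0 f1" "u \<in> harcs G"
  shows "f1 ` arc_of G u = arc_of H (f1 u)"
  using assms unfolding is_morphism_def arc_of_def by auto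

lemma cover_from_outs:
  assumes "wf_graph G" "\<not> has_loop G" "wf_graph H" "\<not> has_loop H" "is_morphism G H f0 f1"
    "\<forall>x\<in>gnodes G. bij_betw f1 (outs G x) (outs H (f0 x))"
  shows "is_covering G H f0 f1"
  unfolding is_covering_def
proof (intro conjI ballI)
  show "is_morphism G H f0 f1" by fact
  fix x assume x: "x \<in> gnodes G"
  have b1: "bij_betw f1 (outs G x) (outs H (f0 x))" using assms(6) x by auto
  have b2: "bij_betw (arc_of H) (outs H (f0 x)) (arcs_at H (f0 x))"
    using inj_arc[OF assms(3,4)] arcs_at_eq[OF assms(3)] by (simp add: bij_betw_def)
  have b: "bij_betw (arc_of H \<circ> f1) (outs G x) (arcs_at H (f0 x))"
    using bij_betw_trans[OF b1 b2] .
  have ig: "inj_on (arc_of G) (outs G x)" using inj_arc[OF assms(1,2)] .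
  have A: "arcs_at G x = arc_of G ` outs G x" using arcs_at_eq[OF assms(1)] .
  have eq: "\<And>u. u \<in> outs G x \<Longrightarrow> f1 ` arc_of G u = arc_of H (f1 u)"
    using mor_arc[OF assms(5)] unfolding outs_def by auto
  show "bij_betw (\<lambda>e. f1 ` e) (arcs_at G x) (arcs_at H (f0 x))"
    unfolding bij_betw_def
  proof
    show "inj_on (\<lambda>e. f1 ` e) (arcs_at G x)"
    proof (rule inj_onI)
      fix e1 e2 assume "e1 \<in> arcs_at G x" "e2 \<in> arcs_at G x" "f1 ` e1 = f1 ` e2"
      then obtain u1 u2 where "u1 \<in> outs G x" "u2 \<in> outs G x" "e1 = arc_of G u1" "e2 = arc_of G u2"
        "arc_of H (f1 u1) = arc_of H (f1 u2)" using A eq by auto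
      thus "e1 = e2" using b unfolding bij_betw_def inj_on_def by auto
    qed
    have "(\<lambda>e. f1 ` e) ` arcs_at G x = (arc_of H \<circ> f1) ` outs G x"
      unfolding A image_image using eq by (auto intro: image_cong)
    thus "(\<lambda>e. f1 ` e) ` arcs_at G x = arcs_at H (f0 x)" using b unfolding bij_betw_def by simp
  qed
qed

lemma covering_comp:
  assumes "is_covering U Y g0 g1" "is_covering Y X f0 f1"
  shows "is_covering U X (\<lambda>x. f0 (g0 x)) (\<lambda>u. f1 (g1 u))"
  unfolding is_covering_def
proof (intro conjI ballI)
  show "is_morphism U X (\<lambda>x. f0 (g0 x)) (\<lambda>u. f1 (g1 u))"
    using assms unfolding is_covering_def is_morphism_def by auto
  fix x assume x: "x \<in> gnodes U"
  have gx: "g0 x \<in> gnodes Y" using assms(1) x unfolding is_covering_def is_morphism_def by auto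
  have "bij_betw ((\<lambda>e. f1 ` e) \<circ> (\<lambda>e. g1 ` e)) (arcs_at U x) (arcs_at X (f0 (g0 x)))"
    using assms x gx unfolding is_covering_def by (blast intro: bij_betw_trans)
  moreover have "((\<lambda>e. f1 ` e) \<circ> (\<lambda>e. g1 ` e)) = (\<lambda>e. (\<lambda>u. f1 (g1 u)) ` e)"
    by (auto simp: image_image)
  ultimately show "bij_betw (\<lambda>e. (\<lambda>u. f1 (g1 u)) ` e) (arcs_at U x) (arcs_at X (f0 (g0 x)))" by simp
qed



locale cset =
  fixes Y :: "('w, 'b) ugraph" and p :: nat and h0 :: "nat \<Rightarrow> 'w" and h1 :: "nat \<times> bool \<Rightarrow> 'b"
  assumes wfY: "wf_graph Y" and nlY: "\<not> has_loop Y" and p1: "p > 1"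
    and hm: "is_morphism (cyc p) Y h0 h1" and nbt: "\<not> has_backtracking p h1"
begin

definition pr :: "nat \<Rightarrow> nat" where "pr i = (i + p - 1) mod p"

definition endpt :: "nat \<Rightarrow> 'b list \<Rightarrow> 'w" where
  "endpt i w = (if w = [] then h0 i else gtgt Y (last w))"

definition ok_ext :: "nat \<Rightarrow> 'b list \<Rightarrow> 'b \<Rightarrow> bool" where
  "ok_ext i w u \<longleftrightarrow> u \<in> harcs Y \<and> gsrc Y u = endpt i w \<and>
     (if w = [] then u \<noteq> h1 (i, True) \<and> u \<noteq> h1 (pr i, False) else u \<noteq> ginv Y (last w))"

definition valid :: "nat \<Rightarrow> 'b list \<Rightarrow> bool" where
  "valid i w \<longleftrightarrow> (\<forall>k<length w. ok_ext i (take k w) (w ! k))"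

lemma valid_Nil[simp]: "valid i []" by (simp add: valid_def)

lemma valid_snoc[simp]: "valid i (w @ [u]) \<longleftrightarrow> valid i w \<and> ok_ext i w u"
  unfolding valid_def by (auto simp: nth_append less_Suc_eq)

lemma valid_butlast: "valid i w \<Longrightarrow> w \<noteq> [] \<Longrightarrow> valid i (butlast w) \<and> ok_ext i (butlast w) (last w)"
  by (metis append_butlast_last_id valid_snoc)

lemma pr_lt: "pr i < p" using p1 by (simp add: pr_def)

lemma Suc_pr: "i < p \<Longrightarrow> Suc (pr i) mod p = i"
proof -
  assume i: "i < p"
  have "Suc (pr i) mod p = Suc ((i + p - 1) mod p) mod p" by (simp add: pr_def)
  also have "\<dots> = Suc (i + p - 1) mod p" by (simp add: mod_Suc_eq)
  also have "Suc (i + p - 1) = i + p" using p1 by simp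
  finally show ?thesis using i by simp
qed

definition UU :: "(nat \<times> 'b list, nat \<times> 'b list) ugraph" where
  "UU = \<lparr> gnodes = {(i, w). i < p \<and> valid i w},
     harcs = {(k, []) | k. k < 2 * p} \<union> {(k, v). k div 2 < p \<and> v \<noteq> [] \<and> valid (k div 2) v},
     gsrc = (\<lambda>(k, v). if v = [] then (if even k then (k div 2, []) else (Suc (k div 2) mod p, []))
                      else (if even k then (k div 2, butlast v) else (k div 2, v))),
     gtgt = (\<lambda>(k, v). if v = [] then (if even k then (Suc (k div 2) mod p, []) else (k div 2, []))
                      else (if even k then (k div 2, v) else (k div 2, butlast v))),
     ginv = (\<lambda>(k, v). (if even k then Suc k else k - 1, v)) \<rparr>"

lemma UU_simps:
  "gnodes UU = {(i, w). i < p \<and> valid i w}"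
  "harcs UU = {(k, []) | k. k < 2 * p} \<union> {(k, v). k div 2 < p \<and> v \<noteq> [] \<and> valid (k div 2) v}"
  "gsrc UU (k, v) = (if v = [] then (if even k then (k div 2, []) else (Suc (k div 2) mod p, []))
                      else (if even k then (k div 2, butlast v) else (k div 2, v)))"
  "gtgt UU (k, v) = (if v = [] then (if even k then (Suc (k div 2) mod p, []) else (k div 2, []))
                      else (if even k then (k div 2, v) else (k div 2, butlast v)))"
  "ginv UU (k, v) = (if even k then Suc k else k - 1, v)"
  by (simp_all add: UU_def)

definition g0 :: "nat \<times> 'b list \<Rightarrow> 'w" where "g0 = (\<lambda>(i, w). endpt i w)"
definition g1 :: "nat \<times> 'b list \<Rightarrow> 'b" where
  "g1 = (\<lambda>(k, v). if v = [] then h1 (k div 2, even k) else (if even k then last v else ginv Y (last v)))"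

lemma hm': "n < p \<Longrightarrow> h1 (n, b) \<in> harcs Y \<and> gsrc Y (h1 (n, True)) = h0 n \<and> gtgt Y (h1 (n, True)) = h0 (Suc n mod p)
   \<and> gsrc Y (h1 (n, False)) = h0 (Suc n mod p) \<and> gtgt Y (h1 (n, False)) = h0 n
   \<and> ginv Y (h1 (n, True)) = h1 (n, False) \<and> ginv Y (h1 (n, False)) = h1 (n, True) \<and> h0 n \<in> gnodes Y"
  using hm unfolding is_morphism_def cyc_def by auto

lemma wfY': "u \<in> harcs Y \<Longrightarrow> gsrc Y u \<in> gnodes Y \<and> gtgt Y u \<in> gnodes Y \<and> ginv Y u \<in> harcs Y
        \<and> ginv Y (ginv Y u) = u \<and> gsrc Y (ginv Y u) = gtgt Y u \<and> gtgt Y (ginv Y u) = gsrc Y u"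
  using wfY unfolding wf_graph_def by metis

lemma parity_cases: obtains n where "k = 2 * n" | n where "k = Suc (2 * n)"
  by (metis oddE evenE Suc_eq_plus1)

lemma wfU: "wf_graph UU"
  unfolding wf_graph_def
proof
  fix a assume a: "a \<in> harcs UU"
  obtain k v where kv: "a = (k, v)" by (cases a)
  show "gsrc UU a \<in> gnodes UU \<and> gtgt UU a \<in> gnodes UU \<and> ginv UU a \<in> harcs UU \<and>
        ginv UU (ginv UU a) = a \<and> gsrc UU (ginv UU a) = gtgt UU a"
  proof (cases "v = []")
    case True
    then show ?thesis using a kv p1 by (cases k rule: parity_cases) (auto simp: UU_simps)
  next
    case False
    then show ?thesis using a kv valid_butlast[of "k div 2" v]
      by (cases k rule: parity_cases) (auto simp: UU_simps)
  qed
qed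

lemma Suc_mod_ne: "Suc n mod p \<noteq> n"
proof (cases "Suc n < p")
  case True thus ?thesis by simp
next
  case False
  show ?thesis
  proof (cases "Suc n = p")
    case True
    hence "Suc n mod p = 0" by simp
    thus ?thesis using True p1 by simp
  next
    case False2: False
    have "Suc n mod p < p" using p1 by simp
    thus ?thesis using False False2 by simp
  qed
qed

lemma nlU: "\<not> has_loop UU"
  unfolding has_loop_def
proof
  assume "\<exists>u\<in>harcs UU. gsrc UU u = gtgt UU u"
  then obtain k v where a: "(k, v) \<in> harcs UU" "gsrc UU (k, v) = gtgt UU (k, v)" by auto
  show False
  proof (cases "v = []")
    case True
    show False
    proof (cases "even k")
      case True
      have "(k div 2, []::'b list) \<noteq> (Suc (k div 2) mod p, [])" using Suc_mod_ne[of "k div 2"] by simp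
      thus False using a \<open>v = []\<close> True by (simp add: UU_simps)
    next
      case False
      have "(k div 2, []::'b list) \<noteq> (Suc (k div 2) mod p, [])" using Suc_mod_ne[of "k div 2"] by simp
      thus False using a \<open>v = []\<close> False by (simp add: UU_simps)
    qed
  next
    case False
    have "length (butlast v) < length v" using False by simp
    have "butlast v \<noteq> v"
    proof
      assume "butlast v = v"
      hence "length (butlast v) = length v" by simp
      with \<open>length (butlast v) < length v\<close> show False by simp
    qed
    then show False using a False by (simp add: UU_simps split: if_splits)
  qed
qed

lemma pr_Suc: "n < p \<Longrightarrow> pr (Suc n mod p) = n"
proof -
  assume n: "n < p"
  have "pr (Suc n mod p) = (Suc n mod p + (p - 1)) mod p" using p1 by (simp add: pr_def)
  also have "\<dots> = (Suc n + (p - 1)) mod p" by (simp add: mod_add_left_eq)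
  also have "Suc n + (p - 1) = n + p" using p1 by simp
  finally show ?thesis using n by simp
qed

lemma valid_last: "valid i w \<Longrightarrow> w \<noteq> [] \<Longrightarrow> last w \<in> harcs Y"
  using valid_butlast ok_ext_def by blast

lemma endpt_node: "i < p \<Longrightarrow> valid i w \<Longrightarrow> endpt i w \<in> gnodes Y"
  using valid_last[of i w] hm'[of i] wfY' by (auto simp: endpt_def)

lemma morU: "is_morphism UU Y g0 g1"
proof -
  have A: "\<forall>x\<in>gnodes UU. g0 x \<in> gnodes Y" using endpt_node by (auto simp: UU_simps g0_def)
  have B: "g1 a \<in> harcs Y \<and> gsrc Y (g1 a) = g0 (gsrc UU a) \<and> gtgt Y (g1 a) = g0 (gtgt UU a) \<and>
        ginv Y (g1 a) = g1 (ginv UU a)" if a: "a \<in> harcs UU" for a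
  proof -
  obtain k v where kv: "a = (k, v)" by (cases a)
  show ?thesis
  proof (cases "v = []")
    case True
    then show ?thesis using a kv hm' by (cases k rule: parity_cases) (auto simp: UU_simps g0_def g1_def endpt_def)
  next
    case False
    then obtain n where n: "n < p" "valid n v" "n = k div 2" using a kv by (auto simp: UU_simps)
    hence ok: "ok_ext n (butlast v) (last v)" using valid_butlast False by blast
    hence "last v \<in> harcs Y" "gsrc Y (last v) = endpt n (butlast v)" by (auto simp: ok_ext_def)
    then show ?thesis using a kv False n wfY'[of "last v"]
      by (cases k rule: parity_cases) (auto simp: UU_simps g0_def g1_def endpt_def)
  qed
  qed
  show ?thesis unfolding is_morphism_def using A B by blast
qed

lemma out_cases:
  assumes a: "a \<in> outs UU (i, w)"
  shows "(w = [] \<and> a = (2 * i, [])) \<or> (w = [] \<and> a = (Suc (2 * pr i), [])) \<or>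
         (w \<noteq> [] \<and> a = (Suc (2 * i), w)) \<or> (\<exists>u. a = (2 * i, w @ [u]) \<and> ok_ext i w u)"
proof -
  obtain k v where kv: "a = (k, v)" by (cases a)
  have h: "(k, v) \<in> harcs UU" "gsrc UU (k, v) = (i, w)" using a kv by (auto simp: outs_def)
  show ?thesis
  proof (cases "v = []")
    case True
    show ?thesis
    proof (cases k rule: parity_cases)
      case (1 n) thus ?thesis using h True kv by (auto simp: UU_simps)
    next
      case (2 n)
      hence "n < p" "Suc n mod p = i" "w = []" using h True by (auto simp: UU_simps)
      thus ?thesis using pr_Suc 2 True kv by auto
    qed
  next
    case False
    show ?thesis
    proof (cases k rule: parity_cases)
      case (1 n)
      hence "n = i" "butlast v = w" "valid n v" using h False by (auto simp: UU_simps)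
      hence "v = w @ [last v]" "ok_ext i w (last v)" using False valid_butlast by auto
      thus ?thesis using 1 kv \<open>n = i\<close> by metis
    next
      case (2 n)
      thus ?thesis using h False kv by (auto simp: UU_simps)
    qed
  qed
qed

lemma outs_bij:
  assumes x: "(i, w) \<in> gnodes UU"
  shows "bij_betw g1 (outs UU (i, w)) (outs Y (endpt i w))"
proof -
  have i: "i < p" and vw: "valid i w" using x by (auto simp: UU_simps)
  have ne: "h1 (i, True) \<noteq> h1 (pr i, False)"
    using nbt Suc_pr[OF i] pr_lt unfolding has_backtracking_def by metis
  have sub: "g1 ` outs UU (i, w) \<subseteq> outs Y (endpt i w)"
    using morU unfolding is_morphism_def outs_def by (force simp: g0_def)
  have inj: "inj_on g1 (outs UU (i, w))"
  proof (rule inj_onI)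
    fix a b assume a: "a \<in> outs UU (i, w)" and b: "b \<in> outs UU (i, w)" and e: "g1 a = g1 b"
    from out_cases[OF a] out_cases[OF b] e ne show "a = b"
      by (auto simp: g1_def ok_ext_def)
  qed
  have sup: "outs Y (endpt i w) \<subseteq> g1 ` outs UU (i, w)"
  proof
    fix y assume y: "y \<in> outs Y (endpt i w)"
    hence yh: "y \<in> harcs Y" "gsrc Y y = endpt i w" by (auto simp: outs_def)
    show "y \<in> g1 ` outs UU (i, w)"
    proof (cases "w = []")
      case True
      show ?thesis
      proof (cases "y = h1 (i, True)")
        case True
        have "(2 * i, []) \<in> outs UU (i, w)" using i \<open>w = []\<close> by (auto simp: outs_def UU_simps)
        moreover have "g1 (2 * i, []) = y" using True by (simp add: g1_def)
        ultimately show ?thesis by (metis image_eqI)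
      next
        case F1: False
        show ?thesis
        proof (cases "y = h1 (pr i, False)")
          case True
          have "(Suc (2 * pr i), []) \<in> outs UU (i, w)" using i \<open>w = []\<close> pr_lt[of i] Suc_pr[OF i]
            by (auto simp: outs_def UU_simps)
          moreover have "g1 (Suc (2 * pr i), []) = y" using True by (simp add: g1_def)
          ultimately show ?thesis by (metis image_eqI)
        next
          case False
          hence ok: "ok_ext i w y" using F1 yh \<open>w = []\<close> by (simp add: ok_ext_def)
          have "(2 * i, w @ [y]) \<in> outs UU (i, w)" using i vw ok by (auto simp: outs_def UU_simps)
          moreover have "g1 (2 * i, w @ [y]) = y" by (simp add: g1_def)
          ultimately show ?thesis by (metis image_eqI)
        qed
      qed
    next
      case False
      show ?thesis
      proof (cases "y = ginv Y (last w)")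
        case True
        have "(Suc (2 * i), w) \<in> outs UU (i, w)" using i vw False by (auto simp: outs_def UU_simps)
        moreover have "g1 (Suc (2 * i), w) = y" using True False by (simp add: g1_def)
        ultimately show ?thesis by (metis image_eqI)
      next
        case F2: False
        hence ok: "ok_ext i w y" using False yh by (simp add: ok_ext_def)
        have "(2 * i, w @ [y]) \<in> outs UU (i, w)" using i vw ok by (auto simp: outs_def UU_simps)
        moreover have "g1 (2 * i, w @ [y]) = y" by (simp add: g1_def)
        ultimately show ?thesis by (metis image_eqI)
      qed
    qed
  qed
  show ?thesis unfolding bij_betw_def using inj sub sup by blast
qed

lemma covU: "is_covering UU Y g0 g1"
  apply (rule cover_from_outs[OF wfU nlU wfY nlY morU])
  using outs_bij by (auto simp: g0_def)

definition k0 :: "nat \<Rightarrow> nat \<times> 'b list" where "k0 n = (n, [])"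
definition k1 :: "nat \<times> bool \<Rightarrow> nat \<times> 'b list" where
  "k1 = (\<lambda>(n, b). (if b then 2 * n else Suc (2 * n), []))"

lemma K: "k1 ` harcs (cyc p) = {(k, [] :: 'b list) | k. k < 2 * p}"
proof
  show "k1 ` harcs (cyc p) \<subseteq> {(k, []) | k. k < 2 * p}" by (auto simp: k1_def cyc_def)
  show "{(k, []) | k. k < 2 * p} \<subseteq> k1 ` harcs (cyc p)"
  proof
    fix x assume "x \<in> {(k, [] :: 'b list) | k. k < 2 * p}"
    then obtain k where x: "x = (k, [])" "k < 2 * p" by auto
    show "x \<in> k1 ` harcs (cyc p)"
    proof (cases k rule: parity_cases)
      case (1 n)
      hence "x = k1 (n, True)" "(n, True) \<in> harcs (cyc p)" using x by (auto simp: k1_def cyc_def)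
      thus ?thesis by blast
    next
      case (2 n)
      hence "x = k1 (n, False)" "(n, False) \<in> harcs (cyc p)" using x by (auto simp: k1_def cyc_def)
      thus ?thesis by blast
    qed
  qed
qed

definition FF where "FF = del_arcs UU (k1 ` harcs (cyc p))"

lemma FF_simps:
  "harcs FF = {(k, v). k div 2 < p \<and> v \<noteq> [] \<and> valid (k div 2) v}"
  "gsrc FF = gsrc UU" "gtgt FF = gtgt UU" "ginv FF = ginv UU" "gnodes FF = gnodes UU"
  by (auto simp: FF_def del_arcs_def K UU_simps)

lemma mod_pred: "0 < q \<Longrightarrow> m < q \<Longrightarrow> Suc ((m + q - 1) mod q) mod q = m"
proof -
  assume q: "0 < q" and m: "m < q"
  have "Suc ((m + q - 1) mod q) mod q = Suc (m + q - 1) mod q" by (simp add: mod_Suc_eq)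
  also have "Suc (m + q - 1) = m + q" using q by simp
  finally show ?thesis using m by simp
qed

lemma forestF: "is_forest FF"
  unfolding is_forest_def
proof (intro conjI allI impI)
  show "\<not> has_loop FF" using nlU unfolding has_loop_def FF_simps by (auto simp: UU_simps)
next
  fix q :: nat and a b assume q: "1 \<le> q" and cy: "is_pcycle FF q a b"
  have mor: "\<And>n c. n < q \<Longrightarrow> b (n, c) \<in> harcs FF" 
    "\<And>n. n < q \<Longrightarrow> gsrc FF (b (n, True)) = a n"
    "\<And>n. n < q \<Longrightarrow> gtgt FF (b (n, True)) = a (Suc n mod q)"
    "\<And>n. n < q \<Longrightarrow> ginv FF (b (n, True)) = b (n, False)"
    using cy unfolding is_pcycle_def is_morphism_def cyc_def by auto
  define L where "L n = length (snd (a n))" for n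
  define M where "M = Max (L ` {..<q})"
  have z: "0 \<in> {..<q}" using q by simp
  have "M \<in> L ` {..<q}" unfolding M_def using z by (intro Max_in) auto
  then obtain m where m: "m < q" "L m = M" by auto
  have Mx: "\<And>n. n < q \<Longrightarrow> L n \<le> L m" using m unfolding M_def by auto
  define n where "n = (m + q - 1) mod q"
  have n: "n < q" "Suc n mod q = m" using q m mod_pred[of q m] by (auto simp: n_def)
  obtain k1' v1 where e1: "b (n, True) = (k1', v1)" by (cases "b (n, True)")
  obtain k2 v2 where e2: "b (m, True) = (k2, v2)" by (cases "b (m, True)")
  have h1: "k1' div 2 < p" "v1 \<noteq> []" "gsrc UU (k1', v1) = a n" "gtgt UU (k1', v1) = a m"
  proof -
    have "(k1', v1) \<in> harcs FF" using mor(1)[OF n(1), of True] e1 by simp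
    thus "k1' div 2 < p" "v1 \<noteq> []" using FF_simps(1) by auto
    show "gsrc UU (k1', v1) = a n" "gtgt UU (k1', v1) = a m"
      using mor(2,3)[OF n(1)] n e1 by (auto simp: FF_simps)
  qed
  have h2: "k2 div 2 < p" "v2 \<noteq> []" "gsrc UU (k2, v2) = a m" "gtgt UU (k2, v2) = a (Suc m mod q)"
  proof -
    have "(k2, v2) \<in> harcs FF" using mor(1)[OF m(1), of True] e2 by simp
    thus "k2 div 2 < p" "v2 \<noteq> []" using FF_simps(1) by auto
    show "gsrc UU (k2, v2) = a m" "gtgt UU (k2, v2) = a (Suc m mod q)"
      using mor(2,3)[OF m(1)] e2 by (auto simp: FF_simps)
  qed
  have sm: "Suc m mod q < q" using q by simp
  have ev1: "even k1'"
  proof (rule ccontr)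
    assume "odd k1'"
    hence "a n = (k1' div 2, v1)" "a m = (k1' div 2, butlast v1)" using h1 by (auto simp: UU_simps)
    hence Ls: "L n = length v1" "L m = length (butlast v1)" by (auto simp: L_def)
    have pos: "length v1 > 0" using h1(2) by simp
    have B: "length (butlast v1) = length v1 - 1" by simp
    show False using Mx[OF n(1)] Ls pos B by linarith
  qed
  have od2: "odd k2"
  proof (rule ccontr)
    assume "\<not> odd k2"
    hence "a (Suc m mod q) = (k2 div 2, v2)" "a m = (k2 div 2, butlast v2)" using h2 by (auto simp: UU_simps)
    hence Ls: "L (Suc m mod q) = length v2" "L m = length (butlast v2)" by (auto simp: L_def)
    have pos: "length v2 > 0" using h2(2) by simp
    have B: "length (butlast v2) = length v2 - 1" by simp
    show False using Mx[OF sm] Ls pos B by linarith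
  qed
  have "a m = (k1' div 2, v1)" using h1 ev1 by (auto simp: UU_simps)
  moreover have "a m = (k2 div 2, v2)" using h2 od2 by (auto simp: UU_simps)
  ultimately have "v1 = v2" "k2 = Suc k1'" using ev1 od2 by auto presburger
  hence "b (n, False) = b (Suc n mod q, True)"
    using mor(4)[OF n(1)] e1 e2 n ev1 by (auto simp: FF_simps UU_simps)
  thus "has_backtracking q b" unfolding has_backtracking_def using n by metis
qed

lemma conn: "i < p \<Longrightarrow> valid i w \<Longrightarrow> connected_in FF (i, w) (i, [])"
proof (induction w rule: rev_induct)
  case Nil thus ?case by (simp add: connected_in_def)
next
  case (snoc u w)
  have "(Suc (2 * i), w @ [u]) \<in> harcs FF" "gsrc FF (Suc (2 * i), w @ [u]) = (i, w @ [u])"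
    "gtgt FF (Suc (2 * i), w @ [u]) = (i, w)" using snoc.prems by (auto simp: FF_simps UU_simps)
  moreover have "connected_in FF (i, w) (i, [])" using snoc by simp
  ultimately show ?case unfolding connected_in_def
    by (rule_tac converse_rtranclp_into_rtranclp) blast+
qed

lemma conn_fst: "connected_in FF x c \<Longrightarrow> fst c = fst x"
  unfolding connected_in_def
proof (induction rule: rtranclp_induct)
  case base thus ?case by simp
next
  case (step y z)
  then obtain k v where "(k, v) \<in> harcs FF" "gsrc FF (k, v) = y" "gtgt FF (k, v) = z" by auto
  hence "fst z = fst y" by (auto simp: FF_simps UU_simps split: if_splits)
  thus ?case using step by simp
qed

lemma inR:
  assumes "wf_graph X" "is_covering Y X f0 f1"
  shows "in_R X p UU (\<lambda>x. f0 (g0 x)) (\<lambda>u. f1 (g1 u)) k0 k1"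
  unfolding in_R_def Let_def FF_def[symmetric]
proof (intro conjI)
  show "obj_C X UU (\<lambda>x. f0 (g0 x)) (\<lambda>u. f1 (g1 u))"
    unfolding obj_C_def using assms wfU covering_comp[OF covU assms(2)] by simp
  show "is_morphism (cyc p) UU k0 k1"
    unfolding is_morphism_def using p1 by (auto simp: cyc_def k0_def k1_def UU_simps)
  show "inj_on k0 (gnodes (cyc p))" by (auto simp: inj_on_def k0_def)
  show "inj_on k1 (harcs (cyc p))" by (auto simp: inj_on_def k1_def split: if_splits; presburger)
  show "is_forest FF" by (rule forestF)
  show "\<forall>x\<in>gnodes UU. \<exists>!c. c \<in> k0 ` gnodes (cyc p) \<and> connected_in FF x c"
  proof
    fix x assume "x \<in> gnodes UU"
    then obtain i w where x: "x = (i, w)" "i < p" "valid i w" by (auto simp: UU_simps)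
    show "\<exists>!c. c \<in> k0 ` gnodes (cyc p) \<and> connected_in FF x c"
    proof (rule ex1I[of _ "(i, [])"])
      show "(i, []) \<in> k0 ` gnodes (cyc p) \<and> connected_in FF x (i, [])"
        using x conn by (auto simp: k0_def cyc_def)
      fix c assume "c \<in> k0 ` gnodes (cyc p) \<and> connected_in FF x c"
      thus "c = (i, [])" using conn_fst[of x c] x by (auto simp: k0_def)
    qed
  qed
qed

lemma morC: "mor_C Y f0 f1 UU (\<lambda>x. f0 (g0 x)) (\<lambda>u. f1 (g1 u)) g0 g1"
  unfolding mor_C_def using covU by simp

lemma restr: "(\<forall>n\<in>gnodes (cyc p). g0 (k0 n) = h0 n) \<and> (\<forall>a\<in>harcs (cyc p). g1 (k1 a) = h1 a)"
  by (auto simp: cyc_def g0_def k0_def endpt_def g1_def k1_def)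

end
theorem proposition5p3:
  fixes X :: "('v, 'a) ugraph" and Y :: "('w, 'b) ugraph"
    and f0 :: "'w \<Rightarrow> 'v" and f1 :: "'b \<Rightarrow> 'a"
    and p :: nat and h0 :: "nat \<Rightarrow> 'w" and h1 :: "nat \<times> bool \<Rightarrow> 'b"
  assumes "obj_C X Y f0 f1"
    and "\<not> has_loop Y"
    and "p > 1"
    and "is_pcycle Y p h0 h1"
    and "\<not> has_backtracking p h1"
  shows "\<exists>(U :: (nat \<times> 'b list, nat \<times> 'b list) ugraph) \<phi>0 \<phi>1 k0 k1 g0 g1.
           in_R X p U \<phi>0 \<phi>1 k0 k1 \<and> mor_C Y f0 f1 U \<phi>0 \<phi>1 g0 g1 \<and>
           (\<forall>n\<in>gnodes (cyc p). g0 (k0 n) = h0 n) \<and>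
           (\<forall>a\<in>harcs (cyc p). g1 (k1 a) = h1 a)"
proof -
  have o: "wf_graph X" "wf_graph Y" "is_covering Y X f0 f1" using assms(1) unfolding obj_C_def by auto
  interpret c: cset Y p h0 h1
    by (rule cset.intro) (use assms o in \<open>auto simp: is_pcycle_def\<close>)
  have A: "in_R X p c.UU (\<lambda>x. f0 (c.g0 x)) (\<lambda>u. f1 (c.g1 u)) c.k0 c.k1" by (rule c.inR[OF o(1,3)])
  have B: "mor_C Y f0 f1 c.UU (\<lambda>x. f0 (c.g0 x)) (\<lambda>u. f1 (c.g1 u)) c.g0 c.g1" by (rule c.morC)
  show ?thesis
    apply (rule exI[of _ c.UU], rule exI[of _ "\<lambda>x. f0 (c.g0 x)"], rule exI[of _ "\<lambda>u. f1 (c.g1 u)"])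
    apply (rule exI[of _ c.k0], rule exI[of _ c.k1], rule exI[of _ c.g0], rule exI[of _ c.g1])
    using A B c.restr by blast
qed

end
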